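(* Let ancillae $A_1,\dots,A_n$ consecutively measure a $d$-dimensional quantum system $Q$ (prepared in a pure state, or unprepared and purified by a reference $R$), and let each ancilla $A_k$ be amplified by a detector $D_k$. Then for all $1\le i$, $j\le n$ with $j\ge i+2$, the detectors $D_i$ and $D_j$ share no entropy given the intermediate detectors: $$S(D_i:D_j\,|\,D_{i+1}\cdots D_{j-1})=0,$$ where $S(D_i:D_j|D_{i+1}\cdots D_{j-1})=S(D_j|D_{j-1}\cdots D_{i+1})-S(D_j|D_{j-1}\cdots D_i)$.
   Context: Setting: $Q$ is $d$-dimensional; either prepared in $|Q\rangle=\sum_{x_1}\alpha^{(1)}_{x_1}|\widetilde{x}_1\rangle$, or unprepared, i.e. in $|QR\rangle=d^{-1/2}\sum_x|\widetilde{x}\rangle|x\rangle$ with a reference $R$. Ancilla $A_k$ measures $Q$ in the orthonormal basis $\{|\widetilde{x}_k\rangle\}$, with $U^{(k)}_{x_{k-1}x_k}=\langle\widetilde{x}_k|\widetilde{x}_{k-1}\rangle$ unitary; the measurement is the unitary $\sum_x|\widetilde{x}_k\rangle\langle\widetilde{x}_k|\otimes U_x$ with $U_x|0\rangle=|x\rangle$ on $Q$ and the $d$-dimensional ancilla (initially $|0\rangle$, basis $\{|x\rangle\}$), performed consecutively for $k=1,\dots,n$. Amplification: detector $D_k$ copies $A_k$'s basis state, $|x\rangle_{A_k}|0\rangle_{D_k}\mapsto|x\rangle_{A_k}|x\rangle_{D_k}$. Entropies are von Neumann entropies (log base $d$) of reduced states of the global pure state; $S(X|Y)=S(XY)-S(Y)$.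 *)

theory Defs
  imports "Jordan_Normal_Form.Char_Poly" "HOL-Computational_Algebra.Polynomial"
begin

text \<open>Registers: the system Q, the reference R, ancillae A k and detectors D k (k = 1..n).
  Every register is d-dimensional with computational basis indexed by 0..d-1.\<close>
datatype label = Q | R | A nat | D nat

type_synonym cfg = "label \<Rightarrow> nat"          \<comment> \<open>a computational basis state of all registers\<close>
type_synonym state = "cfg \<Rightarrow> complex"

text \<open>Orthonormality of a family of d vectors in C^d; vector x has y-th component bk x y,
  i.e. bk x y = <y|x~>.\<close>
definition orthonormal_basis :: "nat \<Rightarrow> (nat \<Rightarrow> nat \<Rightarrow> complex) \<Rightarrow> bool" where
  "orthonormal_basis d bk \<longleftrightarrow>
     (\<forall>x<d. \<forall>x'<d. (\<Sum>y<d. cnj (bk x y) * bk x' y) = (if x = x' then 1 else 0))"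

text \<open>Measurement of Q by ancilla A k in basis bk: the unitary
  sum_x |x~><x~| (x) U_x on Q (x) A_k with U_x |a> = |a + x mod d> (so U_x|0> = |x>).\<close>
definition measure_step :: "nat \<Rightarrow> (nat \<Rightarrow> nat \<Rightarrow> complex) \<Rightarrow> nat \<Rightarrow> state \<Rightarrow> state" where
  "measure_step d bk k \<psi> = (\<lambda>c. if c Q < d \<and> c (A k) < d then
      (\<Sum>q<d. \<Sum>a<d.
         (\<Sum>x<d. bk x (c Q) * cnj (bk x q) * (if c (A k) = (a + x) mod d then 1 else 0))
         * \<psi> (c(Q := q, A k := a)))
    else 0)"

text \<open>Amplification of A k by D k: |a>|e> -> |a>|e + a mod d> (so |x>|0> -> |x>|x>).\<close>
definition amplify_step :: "nat \<Rightarrow> nat \<Rightarrow> state \<Rightarrow> state" where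
  "amplify_step d k \<psi> = (\<lambda>c. if c (D k) < d \<and> c (A k) < d then
      \<psi> (c(D k := (c (D k) + d - c (A k)) mod d)) else 0)"

definition init_prepared :: "nat \<Rightarrow> (nat \<Rightarrow> complex) \<Rightarrow> state" where
  "init_prepared d \<phi> = (\<lambda>c. if (\<forall>l. l \<noteq> Q \<longrightarrow> c l = 0) \<and> c Q < d then \<phi> (c Q) else 0)"

text \<open>|QR> = d^(-1/2) sum_x |x~_1>_Q |x>_R.\<close>
definition init_unprepared :: "nat \<Rightarrow> (nat \<Rightarrow> nat \<Rightarrow> complex) \<Rightarrow> state" where
  "init_unprepared d b1 = (\<lambda>c. if (\<forall>l. l \<notin> {Q, R} \<longrightarrow> c l = 0) \<and> c Q < d \<and> c R < d
      then b1 (c R) (c Q) / complex_of_real (sqrt (real d)) else 0)"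

fun run :: "nat \<Rightarrow> (nat \<Rightarrow> nat \<Rightarrow> nat \<Rightarrow> complex) \<Rightarrow> state \<Rightarrow> nat \<Rightarrow> state" where
  "run d b \<psi>0 0 = \<psi>0"
| "run d b \<psi>0 (Suc k) = amplify_step d (Suc k) (measure_step d (b (Suc k)) (Suc k) (run d b \<psi>0 k))"

definition global_state ::
  "nat \<Rightarrow> (nat \<Rightarrow> nat \<Rightarrow> nat \<Rightarrow> complex) \<Rightarrow> bool \<Rightarrow> (nat \<Rightarrow> complex) \<Rightarrow> nat \<Rightarrow> state" where
  "global_state d b prepared \<phi> n =
     run d b (if prepared then init_prepared d \<phi> else init_unprepared d (b 1)) n"

definition active :: "bool \<Rightarrow> nat \<Rightarrow> label set" where
  "active prepared n = {Q} \<union> (if prepared then {} else {R}) \<union> A ` {1..n} \<union> D ` {1..n}"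

definition cfgs :: "nat \<Rightarrow> label set \<Rightarrow> cfg set" where
  "cfgs d L = {c. \<forall>l. (l \<in> L \<longrightarrow> c l < d) \<and> (l \<notin> L \<longrightarrow> c l = 0)}"

definition merge :: "label set \<Rightarrow> cfg \<Rightarrow> cfg \<Rightarrow> cfg" where
  "merge L c e = (\<lambda>l. if l \<in> L then c l else e l)"

definition enum_cfgs :: "nat \<Rightarrow> label set \<Rightarrow> nat \<Rightarrow> cfg" where
  "enum_cfgs d L = (SOME f. bij_betw f {..<card (cfgs d L)} (cfgs d L))"

text \<open>Reduced density matrix of the registers L (partial trace over Act - L), as a matrix
  w.r.t. an (arbitrary) enumeration of the basis configurations of L.\<close>
definition reduced_dm :: "nat \<Rightarrow> label set \<Rightarrow> state \<Rightarrow> label set \<Rightarrow> complex mat" where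
  "reduced_dm d Act \<psi> L = (let N = card (cfgs d L); f = enum_cfgs d L in
     mat N N (\<lambda>(i, j). \<Sum>e\<in>cfgs d (Act - L). \<psi> (merge L (f i) e) * cnj (\<psi> (merge L (f j) e))))"

definition eta :: "nat \<Rightarrow> real \<Rightarrow> real" where
  "eta d x = (if x \<le> 0 then 0 else x * log (real d) x)"

text \<open>Von Neumann entropy (log base d): minus the sum over eigenvalues (with algebraic
  multiplicity) of lambda log_d lambda.\<close>
definition vn_entropy :: "nat \<Rightarrow> complex mat \<Rightarrow> real" where
  "vn_entropy d M = - (\<Sum>z\<in>{z. poly (char_poly M) z = 0}.
      real (order z (char_poly M)) * eta d (Re z))"

definition entropy :: "nat \<Rightarrow> label set \<Rightarrow> state \<Rightarrow> label set \<Rightarrow> real" where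
  "entropy d Act \<psi> L = vn_entropy d (reduced_dm d Act \<psi> L)"

definition cond_entropy :: "nat \<Rightarrow> label set \<Rightarrow> state \<Rightarrow> label set \<Rightarrow> label set \<Rightarrow> real" where
  "cond_entropy d Act \<psi> X Y = entropy d Act \<psi> (X \<union> Y) - entropy d Act \<psi> Y"

end

theory Submission
  imports Defs
begin


lemma prod_lin_nz: "(\<Prod>a\<leftarrow>as. [:- a, 1::complex:]) \<noteq> 0"
  by (auto simp: prod_list_zero_iff)

lemma order_prod_lin: "order z (\<Prod>a\<leftarrow>as. [:- a, 1::complex:]) = count_list as z"
proof (induction as)
  case Nil then show ?case by (simp add: order_0I)
next
  case (Cons a as)
  have "order z ([:- a, 1:] * (\<Prod>a\<leftarrow>as. [:- a, 1::complex:])) =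
        order z [:- a, 1:] + order z (\<Prod>a\<leftarrow>as. [:- a, 1::complex:])"
    using prod_lin_nz[of "a#as"] by (intro order_mult) (simp only: list.map prod_list.Cons, simp)
  moreover have "order z [:- a, 1::complex:] = (if a = z then 1 else 0)"
  proof (cases "a = z")
    case True then show ?thesis using order_power_n_n[of z 1] by simp
  next
    case False then show ?thesis by (intro order_0I[THEN trans]) auto
  qed
  ultimately show ?case using Cons by simp
qed

lemma poly_prod_lin: "poly (\<Prod>a\<leftarrow>as. [:- a, 1::complex:]) z = 0 \<longleftrightarrow> z \<in> set as"
  by (induction as) auto

lemma sum_list_count_real:
  "sum_list (map f xs) = (\<Sum>x\<in>set xs. real (count_list xs x) * (f x :: real))"
proof (induction xs)
  case Nil then show ?case by simp
next
  case (Cons a xs)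
  have "(\<Sum>x\<in>set (a#xs). real (count_list (a#xs) x) * f x)
     = (\<Sum>x\<in>insert a (set xs). real (count_list xs x) * f x) + (\<Sum>x\<in>insert a (set xs). (if a = x then f x else 0))"
    by (subst sum.distrib[symmetric]) (auto intro!: sum.cong simp: algebra_simps)
  also have "(\<Sum>x\<in>insert a (set xs). (if a = x then f x else 0)) = f a"
    by (simp add: sum.delta)
  also have "(\<Sum>x\<in>insert a (set xs). real (count_list xs x) * f x) = (\<Sum>x\<in>set xs. real (count_list xs x) * f x)"
    by (cases "a \<in> set xs") (auto simp: sum.insert count_list_0_iff insert_absorb)
  finally show ?case using Cons by simp
qed

lemma vn_entropy_ut:
  assumes "M \<in> carrier_mat N N" "upper_triangular M"
  shows "vn_entropy d M = - (\<Sum>i<N. eta d (Re (M $$ (i,i))))"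
proof -
  have cp: "char_poly M = (\<Prod>a\<leftarrow>diag_mat M. [:- a, 1:])"
    using char_poly_upper_triangular[OF assms] .
  have "{z. poly (char_poly M) z = 0} = set (diag_mat M)"
    unfolding cp using poly_prod_lin by blast
  then have "(\<Sum>z\<in>{z. poly (char_poly M) z = 0}. real (order z (char_poly M)) * eta d (Re z))
     = (\<Sum>z\<in>set (diag_mat M). real (count_list (diag_mat M) z) * eta d (Re z))"
    unfolding cp order_prod_lin by simp
  also have "\<dots> = sum_list (map (\<lambda>z. eta d (Re z)) (diag_mat M))"
    using sum_list_count_real[of "\<lambda>z. eta d (Re z)" "diag_mat M"] by simp
  also have "\<dots> = (\<Sum>i<N. eta d (Re (M $$ (i,i))))"
    using assms(1) by (simp add: diag_mat_def sum_list_sum_nth atLeast0LessThan)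
  finally show ?thesis unfolding vn_entropy_def by simp
qed

lemma cfgs_insert:
  assumes "l \<notin> X"
  shows "cfgs d (insert l X) = (\<lambda>(e,v). e(l:=v)) ` (cfgs d X \<times> {..<d})"
proof
  show "cfgs d (insert l X) \<subseteq> (\<lambda>(e,v). e(l:=v)) ` (cfgs d X \<times> {..<d})"
  proof
    fix c assume c: "c \<in> cfgs d (insert l X)"
    have "c = (\<lambda>(e,v). e(l:=v)) (c(l:=0), c l)" by simp
    moreover have "(c(l:=0), c l) \<in> cfgs d X \<times> {..<d}"
      using c assms by (auto simp: cfgs_def)
    ultimately show "c \<in> (\<lambda>(e,v). e(l:=v)) ` (cfgs d X \<times> {..<d})" by blast
  qed
  show "(\<lambda>(e,v). e(l:=v)) ` (cfgs d X \<times> {..<d}) \<subseteq> cfgs d (insert l X)"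
    using assms by (auto simp: cfgs_def)
qed

lemma cfgs_insert_inj:
  assumes "l \<notin> X"
  shows "inj_on (\<lambda>(e,v). e(l:=v)) (cfgs d X \<times> {..<d})"
proof (rule inj_onI, clarify)
  fix e v e' v'
  assume "e \<in> cfgs d X" "e' \<in> cfgs d X" "e(l := v) = e'(l := v')"
  then show "e = e' \<and> v = v'" using assms
    by (auto simp: cfgs_def fun_eq_iff) (metis fun_upd_same, metis fun_upd_other)
qed

lemma sum_cfgs_insert:
  assumes "l \<notin> X"
  shows "(\<Sum>e\<in>cfgs d (insert l X). F e) = (\<Sum>e\<in>cfgs d X. \<Sum>v<d. F (e(l:=v)))"
proof -
  have "(\<Sum>e\<in>cfgs d (insert l X). F e) = (\<Sum>p\<in>cfgs d X \<times> {..<d}. F ((\<lambda>(e,v). e(l:=v)) p))"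
    unfolding cfgs_insert[OF assms] by (rule sum.reindex[OF cfgs_insert_inj[OF assms], unfolded comp_def])
  also have "\<dots> = (\<Sum>e\<in>cfgs d X. \<Sum>v<d. F (e(l:=v)))"
    by (simp add: sum.cartesian_product case_prod_unfold)
  finally show ?thesis .
qed

lemma cfgs_empty: "cfgs d {} = {\<lambda>_. 0}"
  by (auto simp: cfgs_def)

lemma finite_cfgs: "finite X \<Longrightarrow> finite (cfgs d X)"
proof (induction X rule: finite_induct)
  case empty then show ?case by (simp add: cfgs_empty)
next
  case (insert l X) then show ?case by (simp add: cfgs_insert)
qed

definition marg :: "nat \<Rightarrow> label set \<Rightarrow> state \<Rightarrow> label set \<Rightarrow> cfg \<Rightarrow> real" where
  "marg d Act \<psi> L y = (\<Sum>e\<in>cfgs d (Act - L). (cmod (\<psi> (merge L y e)))\<^sup>2)"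

lemma entropy_diag:
  assumes fin: "finite L"
    and diag: "\<And>y y' e. y \<in> cfgs d L \<Longrightarrow> y' \<in> cfgs d L \<Longrightarrow> y \<noteq> y' \<Longrightarrow> e \<in> cfgs d (Act - L)
       \<Longrightarrow> \<psi> (merge L y e) * cnj (\<psi> (merge L y' e)) = 0"
  shows "entropy d Act \<psi> L = - (\<Sum>y\<in>cfgs d L. eta d (marg d Act \<psi> L y))"
proof -
  define N where "N = card (cfgs d L)"
  define f where "f = enum_cfgs d L"
  have "\<exists>h. bij_betw h {..<N} (cfgs d L)"
    using ex_bij_betw_nat_finite[OF finite_cfgs[OF fin]] unfolding N_def atLeast0LessThan .
  then have bij: "bij_betw f {..<N} (cfgs d L)"
    unfolding f_def enum_cfgs_def N_def by (rule someI_ex)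
  define M where "M = reduced_dm d Act \<psi> L"
  have M: "M = mat N N (\<lambda>(i, j). \<Sum>e\<in>cfgs d (Act - L). \<psi> (merge L (f i) e) * cnj (\<psi> (merge L (f j) e)))"
    unfolding M_def reduced_dm_def N_def f_def Let_def by simp
  have car: "M \<in> carrier_mat N N" unfolding M by simp
  have ut: "upper_triangular M"
    unfolding upper_triangular_def
  proof (intro allI impI)
    fix i j assume i: "i < dim_row M" and j: "j < i"
    then have iN: "i < N" "j < N" unfolding M by auto
    have "f i \<noteq> f j" using bij iN j unfolding bij_betw_def inj_on_def by (metis lessThan_iff less_irrefl order.strict_trans)
    moreover have "f i \<in> cfgs d L" "f j \<in> cfgs d L" using bij iN unfolding bij_betw_def by auto
    ultimately show "M $$ (i, j) = 0" unfolding M using iN by (auto intro!: sum.neutral diag)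
  qed
  have "entropy d Act \<psi> L = - (\<Sum>i<N. eta d (Re (M $$ (i,i))))"
    unfolding entropy_def M_def[symmetric] by (rule vn_entropy_ut[OF car ut])
  also have "(\<Sum>i<N. eta d (Re (M $$ (i,i)))) = (\<Sum>i<N. eta d (marg d Act \<psi> L (f i)))"
  proof (rule sum.cong[OF refl])
    fix i assume "i \<in> {..<N}"
    then have "M $$ (i,i) = (\<Sum>e\<in>cfgs d (Act - L). \<psi> (merge L (f i) e) * cnj (\<psi> (merge L (f i) e)))"
      unfolding M by simp
    also have "\<dots> = (\<Sum>e\<in>cfgs d (Act - L). complex_of_real ((cmod (\<psi> (merge L (f i) e)))\<^sup>2))"
      by (rule sum.cong[OF refl]) (simp only: complex_norm_square)
    finally show "eta d (Re (M $$ (i,i))) = eta d (marg d Act \<psi> L (f i))"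
      unfolding marg_def by simp
  qed
  also have "\<dots> = (\<Sum>y\<in>cfgs d L. eta d (marg d Act \<psi> L y))"
    by (rule sum.reindex_bij_betw[OF bij])
  finally show ?thesis .
qed



definition zl :: "state \<Rightarrow> label \<Rightarrow> bool" where
  "zl \<psi> l \<longleftrightarrow> (\<forall>c. c l \<noteq> 0 \<longrightarrow> \<psi> c = 0)"

lemma zl_measure: "l \<noteq> Q \<Longrightarrow> l \<noteq> A k \<Longrightarrow> zl \<psi> l \<Longrightarrow> zl (measure_step d bk k \<psi>) l"
  unfolding zl_def measure_step_def by auto

lemma zl_amplify: "l \<noteq> D k \<Longrightarrow> zl \<psi> l \<Longrightarrow> zl (amplify_step d k \<psi>) l"
  unfolding zl_def amplify_step_def by auto

lemma zl_run:
  assumes "\<And>m. zl \<psi>0 (A m)" "\<And>m. zl \<psi>0 (D m)"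
  shows "k < m \<Longrightarrow> zl (run d b \<psi>0 k) (A m) \<and> zl (run d b \<psi>0 k) (D m)"
proof (induction k)
  case 0 then show ?case using assms by simp
next
  case (Suc k) then show ?case
    by (auto intro!: zl_amplify zl_measure)
qed

lemma mod_ne0: "(x::nat) < d \<Longrightarrow> y < d \<Longrightarrow> x \<noteq> y \<Longrightarrow> (x + d - y) mod d \<noteq> 0"
proof (cases "x < y")
  case True
  assume "x < d" "y < d" "x \<noteq> y"
  then have "x + d - y < d" "0 < x + d - y" using True by auto
  then show ?thesis by simp
next
  case False
  assume "x < d" "y < d" "x \<noteq> y"
  then have "x + d - y = (x - y) + d" using False by auto
  moreover have "(x - y) mod d = x - y" using \<open>x < d\<close> by simp
  moreover have "((x - y) + d) mod d = (x - y) mod d" by simp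
  ultimately show ?thesis using False \<open>x \<noteq> y\<close> by simp
qed

definition sf :: "nat \<Rightarrow> (nat \<Rightarrow> nat \<Rightarrow> complex) \<Rightarrow> nat \<Rightarrow> state \<Rightarrow> cfg \<Rightarrow> complex" where
  "sf d bk k \<psi> c = (\<Sum>q'<d. cnj (bk (c (A k)) q') * \<psi> (c(Q:=q', A k:=0, D k:=0)))"

lemma step_formula:
  assumes zA: "zl \<psi> (A k)" and zD: "zl \<psi> (D k)"
  shows "amplify_step d k (measure_step d bk k \<psi>) c =
    (if c Q < d \<and> c (A k) < d \<and> c (D k) = c (A k) then bk (c (A k)) (c Q) * sf d bk k \<psi> c else 0)"
proof (cases "c (D k) < d \<and> c (A k) < d")
  case False then show ?thesis unfolding amplify_step_def by auto
next
  case True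
  define c' where "c' = c(D k := (c (D k) + d - c (A k)) mod d)"
  have amp: "amplify_step d k (measure_step d bk k \<psi>) c = measure_step d bk k \<psi> c'"
    unfolding amplify_step_def c'_def using True by simp
  show ?thesis
  proof (cases "c (D k) = c (A k)")
    case False
    then have "c' (D k) \<noteq> 0" unfolding c'_def using True mod_ne0 by simp
    then have "\<And>q a. \<psi> (c'(Q := q, A k := a)) = 0" using zD unfolding zl_def by simp
    then show ?thesis unfolding amp unfolding measure_step_def using False by simp
  next
    case eq: True
    have c'eq: "c' = c(D k := 0)" unfolding c'_def using eq True by simp
    show ?thesis
    proof (cases "c Q < d")
      case False then show ?thesis unfolding amp unfolding measure_step_def c'eq by simp
    next
      case cQ: True
      have "measure_step d bk k \<psi> c' = (\<Sum>q<d. \<Sum>a<d.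
         (\<Sum>x<d. bk x (c Q) * cnj (bk x q) * (if c (A k) = (a + x) mod d then 1 else 0))
         * \<psi> (c'(Q := q, A k := a)))"
        unfolding measure_step_def c'eq using cQ True by simp
      also have "\<dots> = (\<Sum>q<d. bk (c (A k)) (c Q) * cnj (bk (c (A k)) q) * \<psi> (c(Q:=q, A k:=0, D k:=0)))"
      proof (rule sum.cong[OF refl])
        fix q assume "q \<in> {..<d}"
        have dpos: "0 < d" using cQ by simp
        have "(\<Sum>a<d. (\<Sum>x<d. bk x (c Q) * cnj (bk x q) * (if c (A k) = (a + x) mod d then 1 else 0))
         * \<psi> (c'(Q := q, A k := a))) = (\<Sum>a<d. if a = 0 then (\<Sum>x<d. bk x (c Q) * cnj (bk x q) * (if c (A k) = (0 + x) mod d then 1 else 0))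
         * \<psi> (c'(Q := q, A k := 0)) else 0)"
          by (rule sum.cong[OF refl]) (use zA in \<open>auto simp: zl_def\<close>)
        also have "\<dots> = (\<Sum>x<d. bk x (c Q) * cnj (bk x q) * (if c (A k) = x mod d then 1 else 0))
         * \<psi> (c'(Q := q, A k := 0))" using dpos by simp
        also have "(\<Sum>x<d. bk x (c Q) * cnj (bk x q) * (if c (A k) = x mod d then 1 else 0))
           = (\<Sum>x<d. if x = c (A k) then bk x (c Q) * cnj (bk x q) else 0)"
          by (rule sum.cong[OF refl]) auto
        also have "\<dots> = bk (c (A k)) (c Q) * cnj (bk (c (A k)) q)"
          using True by (simp add: sum.delta')
        also have "c'(Q := q, A k := 0) = c(Q:=q, A k:=0, D k:=0)"
          unfolding c'eq by (auto simp: fun_eq_iff)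
        finally show "(\<Sum>a<d. (\<Sum>x<d. bk x (c Q) * cnj (bk x q) * (if c (A k) = (a + x) mod d then 1 else 0))
         * \<psi> (c'(Q := q, A k := a))) = bk (c (A k)) (c Q) * cnj (bk (c (A k)) q) * \<psi> (c(Q:=q, A k:=0, D k:=0))" .
      qed
      also have "\<dots> = bk (c (A k)) (c Q) * sf d bk k \<psi> c"
        unfolding sf_def by (simp add: sum_distrib_left mult.assoc)
      finally show ?thesis unfolding amp using cQ True eq by simp
    qed
  qed
qed

lemma row_norm:
  assumes "orthonormal_basis d bk" "a < d"
  shows "(\<Sum>q<d. (cmod (bk a q))\<^sup>2) = 1"
proof -
  have "(\<Sum>y<d. cnj (bk a y) * bk a y) = 1" using assms unfolding orthonormal_basis_def by auto
  then have "complex_of_real (\<Sum>q<d. (cmod (bk a q))\<^sup>2) = 1"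
    by (simp only: of_real_sum complex_norm_square) (simp add: mult.commute)
  then show ?thesis by (metis of_real_eq_1_iff)
qed

lemma completeness:
  assumes ob: "orthonormal_basis d bk" and q: "q < d" "q' < d"
  shows "(\<Sum>a<d. cnj (bk a q) * bk a q') = (if q = q' then 1 else 0)"
proof -
  define M where "M = mat d d (\<lambda>(x,y). bk x y)"
  define MH where "MH = mat d d (\<lambda>(y,x). cnj (bk x y))"
  have MM: "M * MH = 1\<^sub>m d"
  proof (rule eq_matI)
    fix i j assume ij: "i < dim_row (1\<^sub>m d :: complex mat)" "j < dim_col (1\<^sub>m d :: complex mat)"
    then have "(M * MH) $$ (i,j) = (\<Sum>y<d. bk i y * cnj (bk j y))"
      unfolding M_def MH_def by (simp add: scalar_prod_def atLeast0LessThan)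
    also have "\<dots> = (\<Sum>y<d. cnj (bk j y) * bk i y)" by (simp add: mult.commute)
    also have "\<dots> = (if j = i then 1 else 0)" using ob ij unfolding orthonormal_basis_def by auto
    finally show "(M * MH) $$ (i,j) = 1\<^sub>m d $$ (i,j)" using ij by auto
  qed (auto simp: M_def MH_def)
  have "MH * M = 1\<^sub>m d"
    by (rule mat_mult_left_right_inverse[OF _ _ MM]) (auto simp: M_def MH_def)
  then have "(MH * M) $$ (q,q') = 1\<^sub>m d $$ (q,q')" by simp
  then show ?thesis using q unfolding M_def MH_def by (simp add: scalar_prod_def atLeast0LessThan)
qed

lemma parseval:
  assumes ob: "orthonormal_basis d bk"
  shows "(\<Sum>a<d. (cmod (\<Sum>q<d. cnj (bk a q) * v q))\<^sup>2) = (\<Sum>q<d. (cmod (v q))\<^sup>2)"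
proof -
  have "complex_of_real (\<Sum>a<d. (cmod (\<Sum>q<d. cnj (bk a q) * v q))\<^sup>2)
     = (\<Sum>a<d. (\<Sum>q<d. cnj (bk a q) * v q) * (\<Sum>q'<d. bk a q' * cnj (v q')))"
    by (simp only: of_real_sum complex_norm_square cnj_sum complex_cnj_mult complex_cnj_cnj)
  also have "\<dots> = (\<Sum>a<d. \<Sum>q<d. \<Sum>q'<d. v q * cnj (v q') * (cnj (bk a q) * bk a q'))"
    by (rule sum.cong[OF refl], subst sum_product, rule sum.cong[OF refl], rule sum.cong[OF refl]) (simp only: mult_ac)
  also have "\<dots> = (\<Sum>q<d. \<Sum>a<d. \<Sum>q'<d. v q * cnj (v q') * (cnj (bk a q) * bk a q'))"
    by (rule sum.swap)
  also have "\<dots> = (\<Sum>q<d. \<Sum>q'<d. \<Sum>a<d. v q * cnj (v q') * (cnj (bk a q) * bk a q'))"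
    by (rule sum.cong[OF refl], rule sum.swap)
  also have "\<dots> = (\<Sum>q<d. \<Sum>q'<d. v q * cnj (v q') * (\<Sum>a<d. cnj (bk a q) * bk a q'))"
    by (simp only: sum_distrib_left)
  also have "\<dots> = (\<Sum>q<d. \<Sum>q'<d. if q' = q then v q * cnj (v q) else 0)"
    by (intro sum.cong refl) (simp only: lessThan_iff completeness[OF ob] mult_zero_right mult_1_right, auto)
  also have "\<dots> = complex_of_real (\<Sum>q<d. (cmod (v q))\<^sup>2)"
    by (simp only: of_real_sum complex_norm_square sum.delta finite_lessThan lessThan_iff if_True) (rule sum.cong[OF refl], simp)
  finally show ?thesis by (simp only: of_real_eq_iff)
qed

lemma sf_Q: "sf d bk k \<psi> (c(Q:=x)) = sf d bk k \<psi> c"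
  unfolding sf_def by simp

lemma sf_c0:
  assumes "c0 (A k) = 0" "c0 (D k) = 0"
  shows "sf d bk k \<psi> (c0(Q:=q, D k:=v, A k:=a)) = (\<Sum>q'<d. cnj (bk a q') * \<psi> (c0(Q:=q')))"
proof -
  have "\<And>q'. c0(Q:=q, D k:=v, A k:=a, Q:=q', A k:=0, D k:=0) = c0(Q:=q')"
    using assms by (auto simp: fun_eq_iff)
  then show ?thesis unfolding sf_def by simp
qed

lemma sf_c0':
  assumes "c0 (A k) = 0" "c0 (D k) = 0"
  shows "sf d bk k \<psi> (c0(Q:=q, A k:=a, D k:=v)) = (\<Sum>q'<d. cnj (bk a q') * \<psi> (c0(Q:=q')))"
proof -
  have "\<And>q'. c0(Q:=q, A k:=a, D k:=v, Q:=q', A k:=0, D k:=0) = c0(Q:=q')"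
    using assms by (auto simp: fun_eq_iff)
  then show ?thesis unfolding sf_def by simp
qed

lemma LOC:
  assumes ob: "orthonormal_basis d bk" and zA: "zl \<phi> (A k)" and zD: "zl \<phi> (D k)"
    and c0A: "c0 (A k) = 0" and c0D: "c0 (D k) = 0"
  shows "(\<Sum>q<d. \<Sum>v<d. \<Sum>a<d. (cmod (amplify_step d k (measure_step d bk k \<phi>) (c0(Q:=q, D k:=v, A k:=a))))\<^sup>2)
       = (\<Sum>q<d. (cmod (\<phi> (c0(Q:=q))))\<^sup>2)"
proof -
  define s where "s a = (\<Sum>q'<d. cnj (bk a q') * \<phi> (c0(Q:=q')))" for a
  have G: "(cmod (amplify_step d k (measure_step d bk k \<phi>) (c0(Q:=q, D k:=v, A k:=a))))\<^sup>2
      = (if v = a then (cmod (bk a q))\<^sup>2 * (cmod (s a))\<^sup>2 else 0)" if "q < d" "a < d" for q v a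
    unfolding step_formula[OF zA zD] sf_c0[OF c0A c0D] s_def[symmetric]
    using that by (simp add: norm_mult power_mult_distrib)
  have "(\<Sum>q<d. \<Sum>v<d. \<Sum>a<d. (cmod (amplify_step d k (measure_step d bk k \<phi>) (c0(Q:=q, D k:=v, A k:=a))))\<^sup>2)
      = (\<Sum>q<d. \<Sum>a<d. \<Sum>v<d. (cmod (amplify_step d k (measure_step d bk k \<phi>) (c0(Q:=q, D k:=v, A k:=a))))\<^sup>2)"
    by (rule sum.cong[OF refl], rule sum.swap)
  also have "\<dots> = (\<Sum>q<d. \<Sum>a<d. \<Sum>v<d. (if v = a then (cmod (bk a q))\<^sup>2 * (cmod (s a))\<^sup>2 else 0))"
    by (intro sum.cong refl) (simp add: G)
  also have "\<dots> = (\<Sum>q<d. \<Sum>a<d. (cmod (bk a q))\<^sup>2 * (cmod (s a))\<^sup>2)"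
    by (intro sum.cong refl) (simp add: sum.delta')
  also have "\<dots> = (\<Sum>a<d. \<Sum>q<d. (cmod (bk a q))\<^sup>2 * (cmod (s a))\<^sup>2)"
    by (rule sum.swap)
  also have "\<dots> = (\<Sum>a<d. (cmod (s a))\<^sup>2 * (\<Sum>q<d. (cmod (bk a q))\<^sup>2))"
    by (simp add: sum_distrib_left mult.commute)
  also have "\<dots> = (\<Sum>a<d. (cmod (s a))\<^sup>2)"
    by (intro sum.cong refl) (simp add: row_norm[OF ob])
  also have "\<dots> = (\<Sum>q<d. (cmod (\<phi> (c0(Q:=q))))\<^sup>2)"
    unfolding s_def by (rule parseval[OF ob])
  finally show ?thesis .
qed

lemma TRANS:
  assumes ob: "orthonormal_basis d bk" and zA: "zl \<phi> (A k)" and zD: "zl \<phi> (D k)"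
    and c0A: "c0 (A k) = 0" and c0D: "c0 (D k) = 0" and w: "w < d"
  shows "(\<Sum>q<d. \<Sum>a<d. (cmod (amplify_step d k (measure_step d bk k \<phi>) (c0(Q:=q, A k:=a, D k:=w))))\<^sup>2)
       = (cmod (\<Sum>q'<d. cnj (bk w q') * \<phi> (c0(Q:=q'))))\<^sup>2"
proof -
  define s where "s a = (\<Sum>q'<d. cnj (bk a q') * \<phi> (c0(Q:=q')))" for a
  have G: "(cmod (amplify_step d k (measure_step d bk k \<phi>) (c0(Q:=q, A k:=a, D k:=w))))\<^sup>2
      = (if a = w then (cmod (bk w q))\<^sup>2 * (cmod (s w))\<^sup>2 else 0)" if "q < d" "a < d" for q a
    unfolding step_formula[OF zA zD] sf_c0'[OF c0A c0D] s_def[symmetric]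
    using that w by (auto simp: norm_mult power_mult_distrib)
  have "(\<Sum>q<d. \<Sum>a<d. (cmod (amplify_step d k (measure_step d bk k \<phi>) (c0(Q:=q, A k:=a, D k:=w))))\<^sup>2)
      = (\<Sum>q<d. \<Sum>a<d. (if a = w then (cmod (bk w q))\<^sup>2 * (cmod (s w))\<^sup>2 else 0))"
    by (intro sum.cong refl) (simp add: G)
  also have "\<dots> = (\<Sum>q<d. (cmod (bk w q))\<^sup>2 * (cmod (s w))\<^sup>2)"
    using w by (simp add: sum.delta')
  also have "\<dots> = (cmod (s w))\<^sup>2"
    using row_norm[OF ob w] by (simp add: sum_distrib_right[symmetric])
  finally show ?thesis unfolding s_def .
qed



lemma merge_upd: "l \<notin> L \<Longrightarrow> merge L y (e(l:=v)) = (merge L y e)(l:=v)"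
  unfolding merge_def by (auto simp: fun_eq_iff)

lemma merge_insert: "merge (insert l L) y e = (merge L y e)(l := y l)"
  unfolding merge_def by (auto simp: fun_eq_iff)

lemma active_Suc: "active p (Suc k) = insert (A (Suc k)) (insert (D (Suc k)) (active p k))"
  unfolding active_def by (auto simp: atLeastAtMostSuc_conv)

lemma A_notin_active: "k < m \<Longrightarrow> A m \<notin> active p k" and D_notin_active: "k < m \<Longrightarrow> D m \<notin> active p k"
  unfolding active_def by auto

lemma Q_in_active: "Q \<in> active p k" unfolding active_def by auto

lemma M1:
  assumes ob: "orthonormal_basis d (b (Suc k))"
    and z0A: "\<And>m. zl \<psi>0 (A m)" and z0D: "\<And>m. zl \<psi>0 (D m)"
    and L: "L \<subseteq> D ` {1..k}"
  shows "marg d (active p (Suc k)) (run d b \<psi>0 (Suc k)) L y = marg d (active p k) (run d b \<psi>0 k) L y"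
proof -
  define X0 where "X0 = active p k - L - {Q}"
  have QL: "Q \<notin> L" "A (Suc k) \<notin> L" "D (Suc k) \<notin> L" using L by auto
  have e1: "active p (Suc k) - L = insert (A (Suc k)) (insert (D (Suc k)) (insert Q X0))"
    unfolding X0_def active_Suc using QL Q_in_active[of p k] by auto
  have e2: "active p k - L = insert Q X0" unfolding X0_def using QL Q_in_active[of p k] by auto
  have n1: "A (Suc k) \<notin> insert (D (Suc k)) (insert Q X0)" "D (Suc k) \<notin> insert Q X0" "Q \<notin> X0"
    unfolding X0_def using A_notin_active[of k "Suc k" p] D_notin_active[of k "Suc k" p] by auto
  have zk: "zl (run d b \<psi>0 k) (A (Suc k))" "zl (run d b \<psi>0 k) (D (Suc k))"
    using zl_run[OF z0A z0D, of k "Suc k"] by auto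
  have "marg d (active p (Suc k)) (run d b \<psi>0 (Suc k)) L y
     = (\<Sum>e\<in>cfgs d X0. \<Sum>q<d. \<Sum>v<d. \<Sum>a<d. (cmod (run d b \<psi>0 (Suc k) (merge L y (e(Q:=q, D (Suc k):=v, A (Suc k):=a)))))\<^sup>2)"
    unfolding marg_def e1 sum_cfgs_insert[OF n1(1)] sum_cfgs_insert[OF n1(2)] sum_cfgs_insert[OF n1(3)] by simp
  also have "\<dots> = (\<Sum>e\<in>cfgs d X0. \<Sum>q<d. (cmod (run d b \<psi>0 k (merge L y (e(Q:=q)))))\<^sup>2)"
  proof (rule sum.cong[OF refl])
    fix e assume e: "e \<in> cfgs d X0"
    have c0: "merge L y e (A (Suc k)) = 0" "merge L y e (D (Suc k)) = 0"
      using e n1 QL unfolding cfgs_def merge_def by auto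
    show "(\<Sum>q<d. \<Sum>v<d. \<Sum>a<d. (cmod (run d b \<psi>0 (Suc k) (merge L y (e(Q:=q, D (Suc k):=v, A (Suc k):=a)))))\<^sup>2)
        = (\<Sum>q<d. (cmod (run d b \<psi>0 k (merge L y (e(Q:=q)))))\<^sup>2)"
      unfolding merge_upd[OF QL(1)] merge_upd[OF QL(2)] merge_upd[OF QL(3)] run.simps
      by (rule LOC[OF ob zk c0])
  qed
  also have "\<dots> = marg d (active p k) (run d b \<psi>0 k) L y"
    unfolding marg_def e2 sum_cfgs_insert[OF n1(3)] by simp
  finally show ?thesis .
qed

definition Tr :: "nat \<Rightarrow> (nat \<Rightarrow> nat \<Rightarrow> nat \<Rightarrow> complex) \<Rightarrow> nat \<Rightarrow> nat \<Rightarrow> nat \<Rightarrow> real" where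
  "Tr d b j u w = (cmod (\<Sum>q<d. cnj (b j w q) * b (j - 1) u q))\<^sup>2"

lemma P_point:
  assumes obk: "orthonormal_basis d (b (Suc m))"
    and zA: "zl \<phi> (A (Suc m))" and zD: "zl \<phi> (D (Suc m))"
  shows "(cmod (\<Sum>q'<d. cnj (b (Suc (Suc m)) w q') * amplify_step d (Suc m) (measure_step d (b (Suc m)) (Suc m) \<phi>) (cc(Q:=q'))))\<^sup>2
     = (\<Sum>q<d. (cmod (amplify_step d (Suc m) (measure_step d (b (Suc m)) (Suc m) \<phi>) (cc(Q:=q))))\<^sup>2) * Tr d b (Suc (Suc m)) (cc (D (Suc m))) w"
proof (cases "cc (A (Suc m)) < d \<and> cc (D (Suc m)) = cc (A (Suc m))")
  case True
  define u where "u = cc (A (Suc m))"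
  define t where "t = sf d (b (Suc m)) (Suc m) \<phi> cc"
  have ud: "u < d" using True u_def by simp
  have R: "amplify_step d (Suc m) (measure_step d (b (Suc m)) (Suc m) \<phi>) (cc(Q:=q)) = (if q < d then b (Suc m) u q * t else 0)" for q
    unfolding step_formula[OF zA zD] sf_Q t_def u_def using True by simp
  have "(\<Sum>q'<d. cnj (b (Suc (Suc m)) w q') * amplify_step d (Suc m) (measure_step d (b (Suc m)) (Suc m) \<phi>) (cc(Q:=q')))
      = t * (\<Sum>q'<d. cnj (b (Suc (Suc m)) w q') * b (Suc m) u q')"
    unfolding R by (simp add: sum_distrib_left mult_ac)
  then have l: "(cmod (\<Sum>q'<d. cnj (b (Suc (Suc m)) w q') * amplify_step d (Suc m) (measure_step d (b (Suc m)) (Suc m) \<phi>) (cc(Q:=q'))))\<^sup>2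
      = (cmod t)\<^sup>2 * Tr d b (Suc (Suc m)) u w"
    unfolding Tr_def by (simp add: norm_mult power_mult_distrib)
  have "(\<Sum>q<d. (cmod (amplify_step d (Suc m) (measure_step d (b (Suc m)) (Suc m) \<phi>) (cc(Q:=q))))\<^sup>2)
     = (\<Sum>q<d. (cmod (b (Suc m) u q))\<^sup>2 * (cmod t)\<^sup>2)"
    unfolding R by (intro sum.cong refl) (simp add: norm_mult power_mult_distrib)
  also have "\<dots> = (cmod t)\<^sup>2" using row_norm[OF obk ud] by (simp add: sum_distrib_right[symmetric])
  finally show ?thesis using l True u_def by simp
next
  case False
  have R: "amplify_step d (Suc m) (measure_step d (b (Suc m)) (Suc m) \<phi>) (cc(Q:=q)) = 0" for q
    unfolding step_formula[OF zA zD] using False by auto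
  show ?thesis unfolding R by simp
qed

lemma core:
  assumes obj: "orthonormal_basis d (b (Suc (Suc m)))" and obk: "orthonormal_basis d (b (Suc m))"
    and z0A: "\<And>m. zl \<psi>0 (A m)" and z0D: "\<And>m. zl \<psi>0 (D m)"
    and L: "L \<subseteq> D ` {1..Suc m}" and Dk: "D (Suc m) \<in> L" and w: "y (D (Suc (Suc m))) < d"
  shows "marg d (active p (Suc (Suc m))) (run d b \<psi>0 (Suc (Suc m))) (insert (D (Suc (Suc m))) L) y
     = marg d (active p (Suc m)) (run d b \<psi>0 (Suc m)) L y * Tr d b (Suc (Suc m)) (y (D (Suc m))) (y (D (Suc (Suc m))))"
proof -
  define k where "k = Suc m"
  define X0 where "X0 = active p k - L - {Q}"
  have QL: "Q \<notin> L" "A (Suc k) \<notin> L" "D (Suc k) \<notin> L" using L unfolding k_def by auto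
  have e1: "active p (Suc k) - insert (D (Suc k)) L = insert (A (Suc k)) (insert Q X0)"
    unfolding X0_def active_Suc using QL Q_in_active[of p k] A_notin_active[of k "Suc k" p] D_notin_active[of k "Suc k" p] by auto
  have e2: "active p k - L = insert Q X0" unfolding X0_def using QL Q_in_active[of p k] by auto
  have n1: "A (Suc k) \<notin> insert Q X0" "Q \<notin> X0"
    unfolding X0_def using A_notin_active[of k "Suc k" p] by auto
  have zk: "zl (run d b \<psi>0 k) (A (Suc k))" "zl (run d b \<psi>0 k) (D (Suc k))"
    using zl_run[OF z0A z0D, of k "Suc k"] by auto
  have zm: "zl (run d b \<psi>0 m) (A (Suc m))" "zl (run d b \<psi>0 m) (D (Suc m))"
    using zl_run[OF z0A z0D, of m "Suc m"] by auto
  have obj': "orthonormal_basis d (b (Suc k))" using obj k_def by simp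
  have w': "y (D (Suc k)) < d" using w k_def by simp
  let ?T = "Tr d b (Suc k) (y (D k)) (y (D (Suc k)))"
  have "marg d (active p (Suc k)) (run d b \<psi>0 (Suc k)) (insert (D (Suc k)) L) y
     = (\<Sum>e\<in>cfgs d X0. \<Sum>q<d. \<Sum>a<d. (cmod (run d b \<psi>0 (Suc k) ((merge L y e)(Q:=q, A (Suc k):=a, D (Suc k) := y (D (Suc k))))))\<^sup>2)"
    unfolding marg_def e1 sum_cfgs_insert[OF n1(1)] sum_cfgs_insert[OF n1(2)] merge_insert
      merge_upd[OF QL(1)] merge_upd[OF QL(2)] by simp
  also have "\<dots> = (\<Sum>e\<in>cfgs d X0. (\<Sum>q<d. (cmod (run d b \<psi>0 k ((merge L y e)(Q:=q))))\<^sup>2) * ?T)"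
  proof (rule sum.cong[OF refl])
    fix e assume e: "e \<in> cfgs d X0"
    let ?c0 = "merge L y e"
    have c0: "?c0 (A (Suc k)) = 0" "?c0 (D (Suc k)) = 0"
      using e n1 QL A_notin_active[of k "Suc k" p] D_notin_active[of k "Suc k" p] unfolding cfgs_def merge_def X0_def by auto
    have c0D: "?c0 (D k) = y (D k)" using Dk unfolding merge_def k_def by simp
    show "(\<Sum>q<d. \<Sum>a<d. (cmod (run d b \<psi>0 (Suc k) (?c0(Q:=q, A (Suc k):=a, D (Suc k) := y (D (Suc k))))))\<^sup>2)
       = (\<Sum>q<d. (cmod (run d b \<psi>0 k (?c0(Q:=q))))\<^sup>2) * ?T"
      apply (subst run.simps(2)[of d b \<psi>0 k])
      apply (subst TRANS[OF obj' zk c0 w'])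
      unfolding k_def run.simps(2)[of d b \<psi>0 m]
      using P_point[where d=d and b=b and m=m and \<phi>="run d b \<psi>0 m" and w="y (D (Suc (Suc m)))" and cc="?c0", OF obk zm] c0D unfolding k_def by simp
  qed
  also have "\<dots> = marg d (active p k) (run d b \<psi>0 k) L y * ?T"
    unfolding marg_def e2 sum_cfgs_insert[OF n1(2)] sum_distrib_right merge_upd[OF QL(1)] by simp
  finally show ?thesis unfolding k_def .
qed



lemma Mn:
  assumes ob: "\<forall>k\<in>{1..n}. orthonormal_basis d (b k)"
    and z0A: "\<And>m. zl \<psi>0 (A m)" and z0D: "\<And>m. zl \<psi>0 (D m)"
    and L: "L \<subseteq> D ` {1..j}"
  shows "j \<le> k \<Longrightarrow> k \<le> n \<Longrightarrow> marg d (active p k) (run d b \<psi>0 k) L y = marg d (active p j) (run d b \<psi>0 j) L y"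
proof (induction k)
  case 0 then show ?case by simp
next
  case (Suc k)
  show ?case
  proof (cases "j = Suc k")
    case True then show ?thesis by simp
  next
    case False
    then have jk: "j \<le> k" using Suc by simp
    have "marg d (active p (Suc k)) (run d b \<psi>0 (Suc k)) L y = marg d (active p k) (run d b \<psi>0 k) L y"
      by (rule M1) (use ob Suc L jk z0A z0D in auto)
    then show ?thesis using Suc jk by simp
  qed
qed

lemma support:
  assumes z0A: "\<And>m. zl \<psi>0 (A m)" and z0D: "\<And>m. zl \<psi>0 (D m)"
  shows "run d b \<psi>0 k c \<noteq> 0 \<Longrightarrow> m \<in> {1..k} \<Longrightarrow> c (D m) = c (A m)"
proof (induction k arbitrary: c)
  case 0 then show ?case by simp
next
  case (Suc k)
  have zk: "zl (run d b \<psi>0 k) (A (Suc k))" "zl (run d b \<psi>0 k) (D (Suc k))"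
    using zl_run[OF z0A z0D, of k "Suc k"] by auto
  have nz: "amplify_step d (Suc k) (measure_step d (b (Suc k)) (Suc k) (run d b \<psi>0 k)) c \<noteq> 0"
    using Suc.prems by simp
  note sfo = nz[unfolded step_formula[OF zk]]
  show ?case
  proof (cases "m = Suc k")
    case True then show ?thesis using sfo by (auto split: if_splits)
  next
    case False
    then have m: "m \<in> {1..k}" using Suc.prems by auto
    have "sf d (b (Suc k)) (Suc k) (run d b \<psi>0 k) c \<noteq> 0" using sfo by (auto split: if_splits)
    then obtain q' where "cnj (b (Suc k) (c (A (Suc k))) q') * run d b \<psi>0 k (c(Q:=q', A (Suc k):=0, D (Suc k):=0)) \<noteq> 0"
      unfolding sf_def by (meson sum.not_neutral_contains_not_neutral)
    then have "run d b \<psi>0 k (c(Q:=q', A (Suc k):=0, D (Suc k):=0)) \<noteq> 0" by simp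
    from Suc.IH[OF this m] show ?thesis using m by auto
  qed
qed

lemma consistency:
  assumes "l \<in> Act" "l \<notin> L0"
  shows "(\<Sum>v<d. marg d Act \<psi> (insert l L0) (y(l:=v))) = marg d Act \<psi> L0 y"
proof -
  have e: "Act - L0 = insert l (Act - insert l L0)" using assms by auto
  have m: "merge L0 y (e(l:=v)) = merge (insert l L0) (y(l:=v)) e" for e v
    using assms unfolding merge_def by (auto simp: fun_eq_iff)
  have "marg d Act \<psi> L0 y = (\<Sum>e\<in>cfgs d (Act - insert l L0). \<Sum>v<d. (cmod (\<psi> (merge (insert l L0) (y(l:=v)) e)))\<^sup>2)"
    unfolding marg_def e by (subst sum_cfgs_insert) (auto simp: m)
  also have "\<dots> = (\<Sum>v<d. marg d Act \<psi> (insert l L0) (y(l:=v)))"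
    unfolding marg_def by (rule sum.swap)
  finally show ?thesis by simp
qed

lemma marg_upd: "l \<notin> L \<Longrightarrow> marg d Act \<psi> L (y(l:=v)) = marg d Act \<psi> L y"
proof -
  assume "l \<notin> L"
  then have "merge L (y(l:=v)) = merge L y" by (auto simp: merge_def fun_eq_iff)
  then show ?thesis unfolding marg_def by simp
qed

lemma marg_nonneg: "0 \<le> marg d Act \<psi> L y"
  unfolding marg_def by (simp add: sum_nonneg)

lemma eta_mult: "0 \<le> a \<Longrightarrow> 0 \<le> b \<Longrightarrow> eta d (a * b) = a * eta d b + b * eta d a"
proof -
  assume a: "0 \<le> a" and b: "0 \<le> b"
  show ?thesis
  proof (cases "a = 0 \<or> b = 0")
    case True then show ?thesis unfolding eta_def by auto
  next
    case False
    then have "0 < a" "0 < b" using a b by auto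
    moreover have "0 < a * b" using \<open>0 < a\<close> \<open>0 < b\<close> by simp
    ultimately have "eta d (a * b) = a * b * log (real d) (a * b)" "eta d a = a * log (real d) a" "eta d b = b * log (real d) b"
      unfolding eta_def using \<open>0 < a\<close> \<open>0 < b\<close> by (auto simp: not_le[symmetric])
    then show ?thesis using \<open>0 < a\<close> \<open>0 < b\<close> by (simp add: log_mult_pos algebra_simps)
  qed
qed

lemma Tr_sum:
  assumes obj: "orthonormal_basis d (b j)" and obj1: "orthonormal_basis d (b (j - 1))" and u: "u < d"
  shows "(\<Sum>v<d. Tr d b j u v) = 1"
  unfolding Tr_def parseval[OF obj] row_norm[OF obj1 u] ..

lemma Tr_nonneg: "0 \<le> Tr d b j u v" unfolding Tr_def by simp



lemma entropy_final:
  assumes z0A: "\<And>m. zl \<psi>0 (A m)" and z0D: "\<And>m. zl \<psi>0 (D m)"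
    and L: "L \<subseteq> D ` {1..n}"
  shows "entropy d (active p n) (run d b \<psi>0 n) L = - (\<Sum>y\<in>cfgs d L. eta d (marg d (active p n) (run d b \<psi>0 n) L y))"
proof (rule entropy_diag)
  show "finite L" using L by (rule finite_subset) simp
next
  fix y y' e
  assume y: "y \<in> cfgs d L" and y': "y' \<in> cfgs d L" and ne: "y \<noteq> y'" and e: "e \<in> cfgs d (active p n - L)"
  from ne obtain l where l: "y l \<noteq> y' l" by (auto simp: fun_eq_iff)
  then have "l \<in> L" using y y' unfolding cfgs_def by (metis (mono_tags, lifting) mem_Collect_eq)
  then obtain k where k: "k \<in> {1..n}" "l = D k" using L by auto
  have AL: "A k \<notin> L" using L by auto
  show "run d b \<psi>0 n (merge L y e) * cnj (run d b \<psi>0 n (merge L y' e)) = 0"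
  proof (rule ccontr)
    assume "run d b \<psi>0 n (merge L y e) * cnj (run d b \<psi>0 n (merge L y' e)) \<noteq> 0"
    then have "run d b \<psi>0 n (merge L y e) \<noteq> 0" "run d b \<psi>0 n (merge L y' e) \<noteq> 0" by auto
    from support[OF z0A z0D this(1) k(1)] support[OF z0A z0D this(2) k(1)]
    have "y l = e (A k)" "y' l = e (A k)" using \<open>l \<in> L\<close> AL k unfolding merge_def by auto
    then show False using l by simp
  qed
qed

lemma Hdiff:
  assumes ob: "\<forall>k\<in>{1..n}. orthonormal_basis d (b k)"
    and z0A: "\<And>m. zl \<psi>0 (A m)" and z0D: "\<And>m. zl \<psi>0 (D m)"
    and jn: "Suc (Suc m) \<le> n"
    and L: "L \<subseteq> D ` {1..Suc m}" and Dk: "D (Suc m) \<in> L"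
  shows "entropy d (active p n) (run d b \<psi>0 n) (insert (D (Suc (Suc m))) L) - entropy d (active p n) (run d b \<psi>0 n) L
     = - (\<Sum>y\<in>cfgs d L. marg d (active p n) (run d b \<psi>0 n) L y * (\<Sum>v<d. eta d (Tr d b (Suc (Suc m)) (y (D (Suc m))) v)))"
proof -
  let ?j = "Suc (Suc m)"
  let ?P = "marg d (active p n) (run d b \<psi>0 n)"
  let ?h = "\<lambda>u. \<Sum>v<d. eta d (Tr d b ?j u v)"
  have L': "insert (D ?j) L \<subseteq> D ` {1..n}" "L \<subseteq> D ` {1..n}" using L jn by auto
  have DjL: "D ?j \<notin> L" using L by auto
  have obj: "orthonormal_basis d (b ?j)" "orthonormal_basis d (b (Suc m))" using ob jn by auto
  have Pins: "?P (insert (D ?j) L) (y(D ?j := v)) = ?P L y * Tr d b ?j (y (D (Suc m))) v"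
    if v: "v < d" for y v
  proof -
    have "?P (insert (D ?j) L) (y(D ?j := v)) = marg d (active p ?j) (run d b \<psi>0 ?j) (insert (D ?j) L) (y(D ?j := v))"
      by (rule Mn[OF ob z0A z0D]) (use L jn in auto)
    also have "\<dots> = marg d (active p (Suc m)) (run d b \<psi>0 (Suc m)) L (y(D ?j := v)) * Tr d b ?j (y (D (Suc m))) v"
      by (subst core[OF obj z0A z0D L Dk]) (use v in auto)
    also have "marg d (active p (Suc m)) (run d b \<psi>0 (Suc m)) L (y(D ?j := v)) = ?P L (y(D ?j := v))"
      by (rule Mn[OF ob z0A z0D L, symmetric]) (use jn in auto)
    also have "\<dots> = ?P L y" by (rule marg_upd[OF DjL])
    finally show ?thesis .
  qed
  have "entropy d (active p n) (run d b \<psi>0 n) (insert (D ?j) L)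
      = - (\<Sum>y\<in>cfgs d L. \<Sum>v<d. eta d (?P (insert (D ?j) L) (y(D ?j := v))))"
    unfolding entropy_final[OF z0A z0D L'(1)] sum_cfgs_insert[OF DjL] ..
  also have "\<dots> = - (\<Sum>y\<in>cfgs d L. \<Sum>v<d. (?P L y * eta d (Tr d b ?j (y (D (Suc m))) v) + Tr d b ?j (y (D (Suc m))) v * eta d (?P L y)))"
    by (intro arg_cong[where f=uminus] sum.cong refl) (simp add: Pins eta_mult marg_nonneg Tr_nonneg)
  also have "\<dots> = - (\<Sum>y\<in>cfgs d L. (?P L y * ?h (y (D (Suc m))) + eta d (?P L y)))"
  proof (intro arg_cong[where f=uminus] sum.cong refl)
    fix y assume y: "y \<in> cfgs d L"
    then have u: "y (D (Suc m)) < d" using Dk unfolding cfgs_def by auto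
    show "(\<Sum>v<d. (?P L y * eta d (Tr d b ?j (y (D (Suc m))) v) + Tr d b ?j (y (D (Suc m))) v * eta d (?P L y)))
        = ?P L y * ?h (y (D (Suc m))) + eta d (?P L y)"
      using Tr_sum[of d b ?j, OF obj(1) _ u] obj(2)
      by (simp add: sum.distrib sum_distrib_left sum_distrib_right[symmetric])
  qed
  also have "\<dots> = - (\<Sum>y\<in>cfgs d L. ?P L y * ?h (y (D (Suc m)))) + entropy d (active p n) (run d b \<psi>0 n) L"
    unfolding entropy_final[OF z0A z0D L'(2)] by (simp add: sum.distrib)
  finally show ?thesis by simp
qed



theorem corollary1:
  fixes d n i j :: nat and b :: "nat \<Rightarrow> nat \<Rightarrow> nat \<Rightarrow> complex"
    and prepared :: bool and \<phi> :: "nat \<Rightarrow> complex"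
  assumes "\<forall>k\<in>{1..n}. orthonormal_basis d (b k)"
    and "prepared \<Longrightarrow> (\<Sum>y<d. (cmod (\<phi> y))\<^sup>2) = 1"
    and "1 \<le> i" and "j \<le> n" and "i + 2 \<le> j"
  shows "cond_entropy d (active prepared n) (global_state d b prepared \<phi> n) {D j} (D ` {i+1..j-1})
       - cond_entropy d (active prepared n) (global_state d b prepared \<phi> n) {D j} (D ` {i..j-1}) = 0"
proof -
  note ob = assms(1)
  define \<psi>0 where "\<psi>0 = (if prepared then init_prepared d \<phi> else init_unprepared d (b 1))"
  have gs: "global_state d b prepared \<phi> n = run d b \<psi>0 n" unfolding global_state_def \<psi>0_def ..
  have z0A: "zl \<psi>0 (A m)" and z0D: "zl \<psi>0 (D m)" for m
    unfolding \<psi>0_def zl_def init_prepared_def init_unprepared_def by auto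
  define m where "m = j - 2"
  have jm: "j = Suc (Suc m)" using assms m_def by simp
  define M where "M = D ` {i+1..Suc m}"
  have M1: "D ` {i+1..j-1} = M" unfolding M_def jm by simp
  have M2: "D ` {i..j-1} = insert (D i) M" unfolding M_def jm using assms jm
    by (auto simp: image_iff)
  have Mi: "M \<subseteq> D ` {1..Suc m}" "insert (D i) M \<subseteq> D ` {1..Suc m}" unfolding M_def using assms jm by auto
  have Dk: "D (Suc m) \<in> M" "D (Suc m) \<in> insert (D i) M" unfolding M_def using assms jm by auto
  have DiM: "D i \<notin> M" unfolding M_def by auto
  have Di_act: "D i \<in> active prepared n" unfolding active_def using assms by auto
  have jn: "Suc (Suc m) \<le> n" using assms jm by simp
  let ?H = "entropy d (active prepared n) (run d b \<psi>0 n)"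
  let ?P = "marg d (active prepared n) (run d b \<psi>0 n)"
  let ?h = "\<lambda>u. \<Sum>v<d. eta d (Tr d b (Suc (Suc m)) u v)"
  have "(\<Sum>y\<in>cfgs d (insert (D i) M). ?P (insert (D i) M) y * ?h (y (D (Suc m))))
      = (\<Sum>y\<in>cfgs d M. \<Sum>v<d. ?P (insert (D i) M) (y(D i := v)) * ?h (y (D (Suc m))))"
    unfolding sum_cfgs_insert[OF DiM] using assms jm by simp
  also have "\<dots> = (\<Sum>y\<in>cfgs d M. ?P M y * ?h (y (D (Suc m))))"
    by (intro sum.cong refl) (simp add: sum_distrib_right[symmetric] consistency[OF Di_act DiM])
  finally have sw: "(\<Sum>y\<in>cfgs d (insert (D i) M). ?P (insert (D i) M) y * ?h (y (D (Suc m))))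
      = (\<Sum>y\<in>cfgs d M. ?P M y * ?h (y (D (Suc m))))" .
  show ?thesis
    unfolding cond_entropy_def gs M1 M2 unfolding jm
    using Hdiff[OF ob z0A z0D jn Mi(1) Dk(1), of prepared] Hdiff[OF ob z0A z0D jn Mi(2) Dk(2), of prepared] sw
    by (simp add: insert_commute)
qed

end
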